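(* Let $t$ be a positive integer. The number of odd entries on row $n$ of the truncated Pascal triangle $(\mathfrak{a}_t(n,k))$ is a power of two for every nonnegative integer $n$ if and only if $t$ is a power of two (i.e. $t=2^q$ for some integer $q\ge 0$). Moreover, in this case, for every nonnegative integer $n$ the number of odd entries on row $n$ is exactly $\frac12\cdot 2^{d(n+t)}$.
   Context: Fix a positive integer $t$. Let $\mathfrak{a}_t:\mathbb{Z}\times\mathbb{Z}\to\mathbb{Z}$ be the unique function satisfying: (i) $\mathfrak{a}_t(0,0)=1$; (ii) $\mathfrak{a}_t(n,k)=0$ if $n<0$, or $k<0$, or $k>\min\{\lfloor (n-1+t)/2\rfloor, n\}$; (iii) $\mathfrak{a}_t(n,k)=\mathfrak{a}_t(n-1,k-1)+\mathfrak{a}_t(n-1,k)$ for all other integer pairs $(n,k)$ (these necessarily have $n>0$). The truncated Pascal triangle is the array $(\mathfrak{a}_t(n,k))_{0\le k\le n}$; row $n$ consists of the entries $\mathfrak{a}_t(n,k)$ for $0\le k\le n$, and "the number of odd entries on row $n$" means the number of $k\in\{0,\dots,n\}$ with $\mathfrak{a}_t(n,k)$ odd. For a nonnegative integer $m$, $d(m)$ denotes the number of nonzero digits (ones) in the base-$2$ representation of $m$ (with $d(0)=0$). *)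

theory Defs
  imports Main
begin

fun trunc_pascal_nat :: "nat \<Rightarrow> nat \<Rightarrow> int \<Rightarrow> int" where
  "trunc_pascal_nat t 0 k = (if k = 0 then 1 else 0)"
| "trunc_pascal_nat t (Suc m) k =
     (if k < 0 \<or> k > min ((int (Suc m) - 1 + int t) div 2) (int (Suc m)) then 0
      else trunc_pascal_nat t m (k - 1) + trunc_pascal_nat t m k)"

definition trunc_pascal :: "nat \<Rightarrow> int \<Rightarrow> int \<Rightarrow> int" where
  "trunc_pascal t n k = (if n < 0 then 0 else trunc_pascal_nat t (nat n) k)"

definition odd_count :: "nat \<Rightarrow> nat \<Rightarrow> nat" where
  "odd_count t n = card {k \<in> {0..n}. odd (trunc_pascal t (int n) (int k))}"

fun bin_digits :: "nat \<Rightarrow> nat" where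
  "bin_digits m = (if m = 0 then 0 else m mod 2 + bin_digits (m div 2))"

declare bin_digits.simps [simp del]

end

theory Submission
  imports Defs
begin


definition B :: "nat \<Rightarrow> int \<Rightarrow> int" where
  "B n k = (if k < 0 then 0 else int (n choose nat k))"

lemma B_neg: "k < 0 \<Longrightarrow> B n k = 0" by (simp add: B_def)
lemma B_big: "k > int n \<Longrightarrow> B n k = 0" by (simp add: B_def)

lemma B_pascal: "B (Suc n) k = B n (k - 1) + B n k"
proof (cases "k \<le> 0")
  case True then show ?thesis by (cases "k = 0") (auto simp: B_def)
next
  case False
  define j where "j = nat k - 1"
  have j: "nat k = Suc j" "nat (k - 1) = j" using False by (auto simp: j_def)
  then show ?thesis using False by (simp add: B_def)
qed

lemma B_sym: "B n k = B n (int n - k)"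
proof -
  consider "k < 0" | "k > int n" | "0 \<le> k \<and> k \<le> int n" by linarith
  then show ?thesis
  proof cases
    case 3
    then have "nat (int n - k) = n - nat k" by auto
    moreover have "nat k \<le> n" using 3 by auto
    ultimately show ?thesis using 3 by (simp add: B_def binomial_symmetric[symmetric])
  qed (auto simp: B_def)
qed


lemma T_formula:
  assumes "t > 0"
  shows "trunc_pascal_nat t n k = (if 2*k \<le> int n + int t - 1 then B n k - B n (k - int t) else 0)"
proof (induction n arbitrary: k)
  case 0
  show ?case
  proof (cases "k = 0")
    case True then show ?thesis using assms by (simp add: B_def)
  next
    case False
    show ?thesis
    proof (cases "2*k \<le> int t - 1")
      case True
      then have "k - int t < 0" by linarith
      then show ?thesis using False by (auto simp: B_def)
    qed (use False in auto)
  qed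
next
  case (Suc n)
  show ?case
  proof (cases "2*k \<le> int n + int t")
    case False
    then show ?thesis by auto
  next
    case le: True
    show ?thesis
    proof (cases "k < 0")
      case True then show ?thesis by (simp add: B_neg)
    next
      case nn: False
      show ?thesis
      proof (cases "k > int (Suc n)")
        case True
        then have "k - int t < 0" using le by linarith
        then show ?thesis using True le by (simp add: B_neg B_big)
      next
        case kle: False
        have ge: "\<not> (k > min ((int (Suc n) - 1 + int t) div 2) (int (Suc n)))"
          using le kle by auto
        have h1: "trunc_pascal_nat t n (k - 1) = B n (k - 1) - B n (k - 1 - int t)"
          using Suc.IH[of "k-1"] le by auto
        show ?thesis
        proof (cases "2*k \<le> int n + int t - 1")
          case True
          then have "trunc_pascal_nat t n k = B n k - B n (k - int t)" using Suc.IH[of k] by auto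
          then show ?thesis using h1 ge nn le
            by (simp add: B_pascal[of n k] B_pascal[of n "k - int t"] algebra_simps)
        next
          case False
          then have eq: "2*k = int n + int t" using le by linarith
          then have "trunc_pascal_nat t n k = 0" using Suc.IH[of k] by auto
          moreover have "B n k = B n (k - int t)" using B_sym[of n k] eq by (smt (verit))
          ultimately show ?thesis using h1 ge nn le
            by (simp add: B_pascal[of n k] B_pascal[of n "k - int t"] algebra_simps)
        qed
      qed
    qed
  qed
qed


lemma B_cong: "2 dvd (B (n + 2^q) k - B n k - B n (k - 2^q))"
proof (induction q arbitrary: n k)
  case 0
  then show ?case using B_pascal[of n k] by simp
next
  case (Suc q)
  have a: "2 dvd (B ((n + 2^q) + 2^q) k - B (n+2^q) k - B (n+2^q) (k - 2^q))" by (rule Suc.IH)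
  have b: "2 dvd (B (n + 2^q) k - B n k - B n (k - 2^q))" by (rule Suc.IH)
  have c: "2 dvd (B (n + 2^q) (k - 2^q) - B n (k - 2^q) - B n (k - 2^q - 2^q))" by (rule Suc.IH)
  have "B (n + 2^Suc q) k - B n k - B n (k - 2^Suc q) =
     (B ((n + 2^q) + 2^q) k - B (n+2^q) k - B (n+2^q) (k - 2^q))
     + (B (n + 2^q) k - B n k - B n (k - 2^q))
     + (B (n + 2^q) (k - 2^q) - B n (k - 2^q) - B n (k - 2^q - 2^q)) + 2 * B n (k - 2^q)"
  proof -
    have p: "n + 2^Suc q = (n + 2^q) + 2^q" by simp
    have p3: "k - 2^Suc q = k - 2^q - (2::int)^q" by simp
    show ?thesis unfolding p p3 by linarith
  qed
  then show ?case using a b c by (metis dvd_add dvd_triv_left)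
qed



lemma choose_double:
  "odd ((2*m) choose (2*j)) = odd (m choose j) \<and> even ((2*m) choose Suc (2*j))"
proof (induction m arbitrary: j)
  case 0
  then show ?case by (cases j) auto
next
  case (Suc m)
  have e: "2 * Suc m = Suc (Suc (2*m))" by simp
  show ?case
  proof (cases j)
    case 0
    then show ?thesis by (simp add: e)
  next
    case (Suc i)
    have j2: "2*j = Suc (Suc (2*i))" using Suc by simp
    have A: "Suc (Suc (2*m)) choose Suc (Suc (2*i)) =
      (2*m choose (2*i)) + 2 * (2*m choose Suc (2*i)) + (2*m choose (2*Suc i))"
      by simp
    have B: "Suc (Suc (2*m)) choose Suc (Suc (Suc (2*i))) =
      (2*m choose Suc (2*i)) + 2 * (2*m choose (2*Suc i)) + (2*m choose Suc (2*Suc i))"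
      by simp
    have i1: "odd ((2*m) choose (2*i)) = odd (m choose i)" "even ((2*m) choose Suc (2*i))"
      using Suc.IH[of i] by auto
    have i2: "odd ((2*m) choose (2*Suc i)) = odd (m choose Suc i)" "even ((2*m) choose Suc (2*Suc i))"
      using Suc.IH[of "Suc i"] by auto
    have "odd (Suc (Suc (2*m)) choose Suc (Suc (2*i))) = odd (Suc m choose Suc i)"
      unfolding A using i1 i2 by simp
    moreover have "even (Suc (Suc (2*m)) choose Suc (Suc (Suc (2*i))))"
      unfolding B using i1 i2 by simp
    ultimately show ?thesis using \<open>j = Suc i\<close> by (simp only: e mult_Suc_right add_2_eq_Suc)
  qed
qed

lemma choose_double_odd1: "odd ((Suc (2*m)) choose Suc (2*j)) = odd (m choose j)"
  using choose_double[of m j] by simp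

lemma choose_double_odd0: "odd ((Suc (2*m)) choose (2*j)) = odd (m choose j)"
proof (cases j)
  case 0 then show ?thesis by simp
next
  case (Suc i)
  have "Suc (2*m) choose (2*j) = (2*m choose Suc (2*i)) + (2*m choose (2*Suc i))"
    using Suc by simp
  then show ?thesis using choose_double[of m i] choose_double[of m "Suc i"] Suc by auto
qed

definition S :: "nat \<Rightarrow> nat set" where "S N = {k. odd (N choose k)}"

lemma S_fin: "finite (S N)"
proof -
  have "S N \<subseteq> {..N}"
  proof
    fix k assume "k \<in> S N"
    then have "odd (N choose k)" by (simp add: S_def)
    then show "k \<in> {..N}" by (metis atMost_iff binomial_eq_0 even_zero not_le)
  qed
  then show ?thesis using finite_subset by blast
qed

lemma even_or_odd_nat: "\<exists>j. k = 2*j \<or> k = Suc (2*j)"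
  by presburger

lemma sne: "Suc (2*a) \<noteq> 2*(b::nat)" "2*(b::nat) \<noteq> Suc (2*a)" by presburger+

lemma S_even: "S (2*m) = (\<lambda>j. 2*j) ` S m"
proof (rule set_eqI)
  fix k
  obtain j where "k = 2*j \<or> k = Suc (2*j)" using even_or_odd_nat by blast
  then show "k \<in> S (2*m) \<longleftrightarrow> k \<in> (\<lambda>j. 2*j) ` S m"
  proof
    assume k: "k = 2*j"
    have "k \<in> (\<lambda>j. 2*j) ` S m \<longleftrightarrow> j \<in> S m" unfolding k by (auto simp: inj_image_mem_iff)
    then show ?thesis using choose_double[of m j] k by (simp add: S_def)
  next
    assume k: "k = Suc (2*j)"
    have "k \<notin> (\<lambda>j. 2*j) ` S m" unfolding k using sne by auto
    then show ?thesis using choose_double[of m j] k by (simp add: S_def)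
  qed
qed

lemma S_odd: "S (Suc (2*m)) = (\<lambda>j. 2*j) ` S m \<union> (\<lambda>j. Suc (2*j)) ` S m"
proof (rule set_eqI)
  fix k
  obtain j where "k = 2*j \<or> k = Suc (2*j)" using even_or_odd_nat by blast
  then show "k \<in> S (Suc (2*m)) \<longleftrightarrow> k \<in> (\<lambda>j. 2*j) ` S m \<union> (\<lambda>j. Suc (2*j)) ` S m"
  proof
    assume k: "k = 2*j"
    have "k \<in> (\<lambda>j. 2*j) ` S m \<longleftrightarrow> j \<in> S m" unfolding k by (auto simp: inj_image_mem_iff)
    moreover have "k \<notin> (\<lambda>j. Suc (2*j)) ` S m" unfolding k using sne by auto
    ultimately show ?thesis using choose_double_odd0[of m j] k by (simp add: S_def)
  next
    assume k: "k = Suc (2*j)"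
    have "k \<in> (\<lambda>j. Suc (2*j)) ` S m \<longleftrightarrow> j \<in> S m" unfolding k by (auto simp: inj_image_mem_iff)
    moreover have "k \<notin> (\<lambda>j. 2*j) ` S m" unfolding k using sne by auto
    ultimately show ?thesis using choose_double_odd1[of m j] k by (simp add: S_def)
  qed
qed



lemma card_S: "card (S N) = 2 ^ bin_digits N"
proof (induction N rule: less_induct)
  case (less N)
  show ?case
  proof (cases "N = 0")
    case True
    have "S 0 = {0}" by (auto simp: S_def) (metis binomial_eq_0 even_zero gr0I)
    then show ?thesis using True by (simp add: bin_digits.simps)
  next
    case False
    have bd: "bin_digits N = N mod 2 + bin_digits (N div 2)"
      using False by (simp add: bin_digits.simps[of N])
    obtain m where "N = 2*m \<or> N = Suc (2*m)" using even_or_odd_nat by blast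
    then show ?thesis
    proof
      assume N: "N = 2*m"
      then have "m < N" using False by simp
      have "card (S N) = card (S m)" unfolding N S_even
        by (rule card_image) (auto simp: inj_on_def)
      also have "\<dots> = 2 ^ bin_digits m" using less.IH[OF \<open>m < N\<close>] .
      finally show ?thesis using bd N by simp
    next
      assume N: "N = Suc (2*m)"
      then have "m < N" by simp
      have c1: "card ((\<lambda>j. 2*j) ` S m) = card (S m)" by (rule card_image) (auto simp: inj_on_def)
      have c2: "card ((\<lambda>j. Suc (2*j)) ` S m) = card (S m)" by (rule card_image) (auto simp: inj_on_def)
      have "card (S N) = card ((\<lambda>j. 2*j) ` S m) + card ((\<lambda>j. Suc (2*j)) ` S m)"
        unfolding N S_odd by (rule card_Un_disjoint) (use S_fin sne in auto)
      also have "\<dots> = 2 * 2 ^ bin_digits m" using c1 c2 less.IH[OF \<open>m < N\<close>] by simp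
      finally show ?thesis using bd N by simp
    qed
  qed
qed

lemma central_even: "m > 0 \<Longrightarrow> even ((2*m) choose m)"
proof -
  assume "m > 0"
  then obtain p where p: "m = Suc p" using not0_implies_Suc by blast
  have "2*m = Suc (Suc (2*p))" using p by simp
  then have "(2*m) choose m = (Suc (2*p) choose p) + (Suc (2*p) choose Suc p)" using p by simp
  moreover have "Suc (2*p) choose Suc p = Suc (2*p) choose p"
    using binomial_symmetric[of "Suc p" "Suc (2*p)"] by simp
  ultimately show ?thesis by simp
qed

lemma half_S:
  assumes "N > 0"
  shows "2 * card {k. 2*k < N \<and> odd (N choose k)} = card (S N)"
proof -
  define H where "H = {k. 2*k < N \<and> odd (N choose k)}"
  have fH: "finite H" unfolding H_def by (rule finite_subset[of _ "{..N}"]) auto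
  have inj: "inj_on (\<lambda>k. N - k) H" unfolding H_def inj_on_def by auto
  have sym: "\<And>k. k \<le> N \<Longrightarrow> N choose (N - k) = N choose k"
    using binomial_symmetric by metis
  have SN: "S N = H \<union> (\<lambda>k. N - k) ` H"
  proof (rule set_eqI)
    fix k
    show "k \<in> S N \<longleftrightarrow> k \<in> H \<union> (\<lambda>k. N - k) ` H"
    proof
      assume k: "k \<in> S N"
      then have ok: "odd (N choose k)" by (simp add: S_def)
      then have kN: "k \<le> N" by (metis binomial_eq_0 even_zero not_le)
      consider "2*k < N" | "2*k = N" | "2*k > N" by linarith
      then show "k \<in> H \<union> (\<lambda>k. N - k) ` H"
      proof cases
        case 1 then show ?thesis using ok by (simp add: H_def)
      next
        case 2
        then have "k > 0" using assms by auto
        then show ?thesis using central_even[of k] 2 ok by simp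
      next
        case 3
        have "N - k \<in> H" unfolding H_def using 3 kN ok sym[OF kN] by auto
        moreover have "k = N - (N - k)" using kN by simp
        ultimately show ?thesis by blast
      qed
    next
      assume "k \<in> H \<union> (\<lambda>k. N - k) ` H"
      then show "k \<in> S N"
      proof
        assume "k \<in> H" then show ?thesis by (simp add: H_def S_def)
      next
        assume "k \<in> (\<lambda>k. N - k) ` H"
        then obtain j where j: "j \<in> H" "k = N - j" by blast
        then have "j \<le> N" by (simp add: H_def)
        then show ?thesis using j sym by (simp add: H_def S_def)
      qed
    qed
  qed
  have disj: "H \<inter> (\<lambda>k. N - k) ` H = {}" unfolding H_def by auto
  have "card (S N) = card H + card ((\<lambda>k. N - k) ` H)"
    unfolding SN by (rule card_Un_disjoint) (use fH disj in auto)
  also have "\<dots> = 2 * card H" using card_image[OF inj] by simp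
  finally show ?thesis unfolding H_def by simp
qed



lemma T_int: "t > 0 \<Longrightarrow> trunc_pascal t (int n) (int k) =
   (if 2*int k \<le> int n + int t - 1 then B n (int k) - B n (int k - int t) else 0)"
  by (simp add: trunc_pascal_def T_formula)

lemma B_nat: "B n (int k) = int (n choose k)" by (simp add: B_def)

lemma count_pow2:
  assumes t: "t = 2^q"
  shows "odd_count t n = card {k. 2*k < n+t \<and> odd ((n+t) choose k)}"
proof -
  have tp: "t > 0" using t by simp
  have key: "odd (B n (int k) + B n (int k - int t)) \<longleftrightarrow> odd ((n+t) choose k)" for k
  proof -
    have D: "even (B (n+t) (int k) - (B n (int k) + B n (int k - int t)))"
      using B_cong[of n q "int k"] t by (simp add: algebra_simps)
    then have "odd (B (n+t) (int k)) \<longleftrightarrow> odd (B n (int k) + B n (int k - int t))"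
      by (metis diff_add_cancel even_add)
    then show ?thesis by (simp add: B_nat)
  qed
  have "{k \<in> {0..n}. odd (trunc_pascal t (int n) (int k))} = {k. 2*k < n+t \<and> odd ((n+t) choose k)}"
  proof (rule set_eqI)
    fix k
    have e1: "odd (trunc_pascal t (int n) (int k)) \<longleftrightarrow>
       (2*k < n+t \<and> odd (B n (int k) + B n (int k - int t)))"
      using T_int[OF tp, of n k] tp by auto
    show "k \<in> {k \<in> {0..n}. odd (trunc_pascal t (int n) (int k))} \<longleftrightarrow>
          k \<in> {k. 2*k < n+t \<and> odd ((n+t) choose k)}"
    proof
      assume "k \<in> {k \<in> {0..n}. odd (trunc_pascal t (int n) (int k))}"
      then show "k \<in> {k. 2*k < n+t \<and> odd ((n+t) choose k)}" using e1 key by auto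
    next
      assume a: "k \<in> {k. 2*k < n+t \<and> odd ((n+t) choose k)}"
      have "k \<le> n"
      proof (rule ccontr)
        assume "\<not> k \<le> n"
        then have kk: "int k > int n" "int k - int t < 0" using a by auto
        have "B n (int k) = 0" "B n (int k - int t) = 0"
          using B_big[OF kk(1)] B_neg[OF kk(2)] by auto
        then show False using key[of k] a by simp
      qed
      then show "k \<in> {k \<in> {0..n}. odd (trunc_pascal t (int n) (int k))}" using a e1 key by auto
    qed
  qed
  then show ?thesis unfolding odd_count_def by simp
qed

lemma bd0: "bin_digits m = 0 \<Longrightarrow> m = 0"
proof (induction m rule: less_induct)
  case (less m)
  show ?case
  proof (rule ccontr)
    assume "m \<noteq> 0"
    then have "m mod 2 = 0" "bin_digits (m div 2) = 0"
      using less.prems bin_digits.simps[of m] by auto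
    then have "m div 2 = 0" using less.IH \<open>m \<noteq> 0\<close> by simp
    then show False using \<open>m mod 2 = 0\<close> \<open>m \<noteq> 0\<close> by presburger
  qed
qed

lemma bd1: "bin_digits m = 1 \<Longrightarrow> \<exists>q. m = 2^q"
proof (induction m rule: less_induct)
  case (less m)
  have m0: "m \<noteq> 0"
  proof
    assume "m = 0" then have "bin_digits m = 0" by (simp add: bin_digits.simps)
    with less.prems show False by simp
  qed
  then have e: "m mod 2 + bin_digits (m div 2) = 1" using less.prems bin_digits.simps[of m] by simp
  show ?case
  proof (cases "m mod 2 = 0")
    case True
    then have "bin_digits (m div 2) = 1" using e by simp
    moreover have "m div 2 < m" using m0 by simp
    ultimately obtain q where "m div 2 = 2^q" using less.IH by blast
    then have "m = 2^Suc q" using True by (metis div_mult_mod_eq add_0_right mult.commute power_Suc)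
    then show ?thesis by blast
  next
    case False
    then have "bin_digits (m div 2) = 0" using e by simp
    then have "m div 2 = 0" by (rule bd0)
    then have "m = 2^0" using m0 by simp
    then show ?thesis by blast
  qed
qed

lemma count_t:
  assumes "t > 0"
  shows "odd_count t t = card (S t) - 1"
proof -
  have "{k \<in> {0..t}. odd (trunc_pascal t (int t) (int k))} = S t - {t}"
  proof (rule set_eqI)
    fix k
    show "k \<in> {k \<in> {0..t}. odd (trunc_pascal t (int t) (int k))} \<longleftrightarrow> k \<in> S t - {t}"
    proof (cases "k < t")
      case True
      then have "trunc_pascal t (int t) (int k) = int (t choose k)"
        using T_int[OF assms, of t k] by (simp add: B_nat B_neg)
      then show ?thesis using True by (simp add: S_def)
    next
      case False
      then have "k = t \<or> k > t" by auto
      then show ?thesis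
      proof
        assume "k = t"
        then have "trunc_pascal t (int t) (int k) = 0" using T_int[OF assms, of t k] by simp
        then show ?thesis using \<open>k = t\<close> by simp
      qed (auto simp: S_def binomial_eq_0)
    qed
  qed
  moreover have "t \<in> S t" by (simp add: S_def)
  ultimately show ?thesis unfolding odd_count_def using S_fin by (simp add: card_Diff_singleton)
qed


theorem theorem4p3:
  fixes t :: nat
  assumes "t > 0"
  shows "((\<forall>n::nat. \<exists>j::nat. odd_count t n = 2 ^ j) \<longleftrightarrow> (\<exists>q::nat. t = 2 ^ q))
       \<and> ((\<exists>q::nat. t = 2 ^ q) \<longrightarrow>
            (\<forall>n::nat. 2 * odd_count t n = 2 ^ bin_digits (n + t)))"
proof -
  have fw: "2 * odd_count t n = 2 ^ bin_digits (n + t)" if "t = 2^q" for q n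
  proof -
    have "2 * odd_count t n = 2 * card {k. 2*k < n+t \<and> odd ((n+t) choose k)}"
      using count_pow2[OF that] by simp
    also have "\<dots> = card (S (n+t))" using half_S assms by simp
    also have "\<dots> = 2 ^ bin_digits (n + t)" by (rule card_S)
    finally show ?thesis .
  qed
  have pw: "\<exists>j. odd_count t n = 2 ^ j" if "t = 2^q" for q n
  proof (cases "bin_digits (n+t)")
    case 0
    then show ?thesis using fw[OF that, of n] by simp
  next
    case (Suc e)
    then have "odd_count t n = 2^e" using fw[OF that, of n] by simp
    then show ?thesis by blast
  qed
  have bw: "\<exists>q. t = 2^q" if h: "\<forall>n. \<exists>j. odd_count t n = 2 ^ j"
  proof -
    obtain j where j: "odd_count t t = 2^j" using h by blast
    define d where "d = bin_digits t"
    have e: "2^d - 1 = (2::nat)^j" using j count_t[OF assms] card_S[of t] d_def by simp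
    have "d \<noteq> 0"
    proof
      assume "d = 0" then show False using e by simp
    qed
    show ?thesis
    proof (cases "d = 1")
      case True then show ?thesis using bd1[of t] d_def by simp
    next
      case False
      with \<open>d \<noteq> 0\<close> obtain c where c: "d = Suc (Suc c)" by (metis not0_implies_Suc One_nat_def)
      then have od: "odd ((2::nat)^d - 1)" by simp
      have "j = 0"
      proof (rule ccontr)
        assume "j \<noteq> 0"
        then have "even ((2::nat)^j)" by simp
        then show False using od e by metis
      qed
      moreover have "(4::nat) \<le> 2^d"
      proof -
        have "(1::nat) \<le> 2^c" by simp
        then show ?thesis using c by simp
      qed
      ultimately show ?thesis using e by simp
    qed
  qed
  show ?thesis using fw pw bw by blast
qed

end
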